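(* There is a universal constant $C$ such that the following holds. Let $p\ge1$, let $(a_{i,j})_{i\le n,j\le m}$ be a real matrix, and let $T\subset B^n_2+\sqrt p\,B^n_1$. Then there is a decomposition $T=\bigcup_{l=1}^NT_l$ with $N\le e^{Cp}$ such that for every $l\le N$ and every $z\in\mathbb{R}^m$, $$\mathbb{E}\sup_{x\in T_l}\sum_{i,j}a_{i,j}x_ig_jz_j\le C\Big(\sum_{i,j}a_{i,j}^2z_j^4\Big)^{1/4}\Big(\sum_{i,j}a_{i,j}^2\Big)^{1/4},$$ where $g_1,\dots,g_m$ are independent standard Gaussian random variables.
   Context: $B^n_2$ and $B^n_1$ denote the unit balls of $\ell_2^n$ and $\ell_1^n$, and $A+B$ is the Minkowski sum. *)

theory Defs
  imports "HOL-Probability.Probability"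
begin

text \<open>Vectors of R^n are represented as functions nat => real vanishing outside {..<n}.\<close>

definition ball2 :: "nat \<Rightarrow> (nat \<Rightarrow> real) set" where
  "ball2 n = {x. (\<forall>i\<ge>n. x i = 0) \<and> (\<Sum>i<n. (x i)\<^sup>2) \<le> 1}"

definition ball1 :: "nat \<Rightarrow> (nat \<Rightarrow> real) set" where
  "ball1 n = {x. (\<forall>i\<ge>n. x i = 0) \<and> (\<Sum>i<n. \<bar>x i\<bar>) \<le> 1}"

definition mink_sum :: "(nat \<Rightarrow> real) set \<Rightarrow> (nat \<Rightarrow> real) set \<Rightarrow> (nat \<Rightarrow> real) set" where
  "mink_sum A B = {(\<lambda>i. u i + v i) | u v. u \<in> A \<and> v \<in> B}"

definition dilate :: "real \<Rightarrow> (nat \<Rightarrow> real) set \<Rightarrow> (nat \<Rightarrow> real) set" where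
  "dilate c A = {(\<lambda>i. c * u i) | u. u \<in> A}"

text \<open>Law of (g_1,...,g_m): independent standard Gaussians (indices 0..m-1).\<close>
definition gauss_vec :: "nat \<Rightarrow> (nat \<Rightarrow> real) measure" where
  "gauss_vec m = PiM {..<m} (\<lambda>_. density lborel std_normal_density)"

end

theory Submission
  imports Defs
begin

abbreviation "gN \<equiv> density lborel std_normal_density"

lemma gv_prob: "prob_space (gauss_vec m)"
  unfolding gauss_vec_def
  by (intro prob_space_PiM prob_space_normal_density) simp

lemma gv_meas_coord: "j < m \<Longrightarrow> (\<lambda>g. g j) \<in> borel_measurable (gauss_vec m)"
proof -
  assume j: "j < m"
  have "(\<lambda>g. g j) \<in> measurable (PiM {..<m} (\<lambda>_. gN)) gN"
    using j by (intro measurable_component_singleton) auto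
  then show ?thesis unfolding gauss_vec_def
    by (subst measurable_cong_sets[OF refl, where N'=gN]) auto
qed

lemma gv_coord_distr:
  assumes j: "j < m"
  shows "distributed (gauss_vec m) lborel (\<lambda>g. g j) std_normal_density"
proof -
  have "distr (gauss_vec m) lborel (\<lambda>g. g j) = distr (gauss_vec m) gN (\<lambda>g. g j)"
    by (rule distr_cong) auto
  also have "\<dots> = gN"
    unfolding gauss_vec_def using j
    by (intro distr_PiM_component prob_space_normal_density) auto
  finally show ?thesis
    unfolding distributed_def using gv_meas_coord[OF j] by auto
qed

lemma gv_indep:
  assumes "m > 0"
  shows "prob_space.indep_vars (gauss_vec m) (\<lambda>_. borel) (\<lambda>j g. g j) {..<m}"
proof -
  interpret prob_space "gauss_vec m" by (rule gv_prob)
  have ne: "{..<m} \<noteq> {}" using assms by auto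
  have rv: "\<And>i. i \<in> {..<m} \<Longrightarrow> random_variable borel (\<lambda>g. g i)"
    using gv_meas_coord by auto
  have L: "distr (gauss_vec m) (\<Pi>\<^sub>M i\<in>{..<m}. borel) (\<lambda>x. \<lambda>i\<in>{..<m}. x i) = gauss_vec m"
  proof -
    have "distr (gauss_vec m) (\<Pi>\<^sub>M i\<in>{..<m}. borel) (\<lambda>x. \<lambda>i\<in>{..<m}. x i)
        = distr (gauss_vec m) (gauss_vec m) (\<lambda>x. x)"
      unfolding gauss_vec_def
      by (rule distr_cong) (auto intro!: sets_PiM_cong simp: space_PiM PiE_def extensional_restrict)
    also have "\<dots> = gauss_vec m" by (rule distr_id)
    finally show ?thesis .
  qed
  have R: "(\<Pi>\<^sub>M i\<in>{..<m}. distr (gauss_vec m) borel (\<lambda>g. g i)) = gauss_vec m"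
    unfolding gauss_vec_def
  proof (rule PiM_cong[OF refl])
    fix i assume i: "i \<in> {..<m}"
    have "distr (PiM {..<m} (\<lambda>_. gN)) borel (\<lambda>g. g i) = distr (PiM {..<m} (\<lambda>_. gN)) gN (\<lambda>g. g i)"
      by (rule distr_cong) auto
    also have "\<dots> = gN" using i
      by (intro distr_PiM_component prob_space_normal_density) auto
    finally show "distr (PiM {..<m} (\<lambda>_. gN)) borel (\<lambda>g. g i) = gN" .
  qed
  show ?thesis
    using indep_vars_iff_distr_eq_PiM'[OF ne rv] L R by simp
qed


lemma gv_lin_distr:
  fixes b :: "nat \<Rightarrow> real"
  assumes s: "0 < (\<Sum>j<m. (b j)\<^sup>2)"
  shows "distributed (gauss_vec m) lborel (\<lambda>g. \<Sum>j<m. b j * g j)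
           (normal_density 0 (sqrt (\<Sum>j<m. (b j)\<^sup>2)))"
proof -
  interpret prob_space "gauss_vec m" by (rule gv_prob)
  define I where "I = {j. j < m \<and> b j \<noteq> 0}"
  have fin: "finite I" unfolding I_def by auto
  have ne: "I \<noteq> {}"
  proof
    assume "I = {}"
    then have "\<And>j. j < m \<Longrightarrow> b j = 0" unfolding I_def by auto
    then show False using s by simp
  qed
  have m0: "m > 0" using s by (cases m) auto
  have ind: "indep_vars (\<lambda>_. borel) (\<lambda>j g. b j * g j) I"
  proof -
    have "indep_vars (\<lambda>_. borel) (\<lambda>j g. g j) I"
      by (rule indep_vars_subset[OF gv_indep[OF m0]]) (auto simp: I_def)
    then have "indep_vars (\<lambda>_. borel) (\<lambda>j. (\<lambda>x. b j * x) \<circ> (\<lambda>g. g j)) I"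
      by (rule indep_vars_compose) auto
    then show ?thesis by (simp add: comp_def)
  qed
  have nd: "distributed (gauss_vec m) lborel (\<lambda>g. b j * g j) (normal_density 0 \<bar>b j\<bar>)"
    if j: "j \<in> I" for j
  proof -
    have "b j \<noteq> 0" "j < m" using j by (auto simp: I_def)
    from normal_density_affine[OF gv_coord_distr[OF \<open>j < m\<close>] _ \<open>b j \<noteq> 0\<close>, of 0]
    show ?thesis by simp
  qed
  have pos: "\<And>j. j \<in> I \<Longrightarrow> 0 < \<bar>b j\<bar>" by (auto simp: I_def)
  from sum_indep_normal[OF fin ne ind pos nd]
  have D: "distributed (gauss_vec m) lborel (\<lambda>g. \<Sum>j\<in>I. b j * g j)
             (normal_density (\<Sum>j\<in>I. 0) (sqrt (\<Sum>j\<in>I. \<bar>b j\<bar>\<^sup>2)))" .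
  have e1: "(\<lambda>g. \<Sum>j\<in>I. b j * g j) = (\<lambda>g. \<Sum>j<m. b j * g j)"
    by (rule ext, rule sum.mono_neutral_left) (auto simp: I_def)
  have e2: "(\<Sum>j\<in>I. \<bar>b j\<bar>\<^sup>2) = (\<Sum>j<m. (b j)\<^sup>2)"
    by (simp, rule sum.mono_neutral_left) (auto simp: I_def)
  show ?thesis using D e1 e2 by simp
qed

lemma gv_lin_moments:
  fixes b :: "nat \<Rightarrow> real" and m :: nat
  defines "s \<equiv> (\<Sum>j<m. (b j)\<^sup>2)"
  shows "integrable (gauss_vec m) (\<lambda>g. (\<Sum>j<m. b j * g j) ^ k)"
    and "(\<integral>g. (\<Sum>j<m. b j * g j) \<partial>gauss_vec m) = 0"
    and "(\<integral>g. (\<Sum>j<m. b j * g j)^2 \<partial>gauss_vec m) = s"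
    and "(\<integral>g. (\<Sum>j<m. b j * g j)^4 \<partial>gauss_vec m) = 3 * s^2"
proof -
  interpret prob_space "gauss_vec m" by (rule gv_prob)
  let ?X = "\<lambda>g. \<Sum>j<m. b j * g j"
  have "integrable (gauss_vec m) (\<lambda>g. ?X g ^ k) \<and>
        (\<integral>g. ?X g \<partial>gauss_vec m) = 0 \<and>
        (\<integral>g. (?X g)^2 \<partial>gauss_vec m) = s \<and>
        (\<integral>g. (?X g)^4 \<partial>gauss_vec m) = 3 * s^2"
  proof (cases "s > 0")
    case False
    then have "s = 0" unfolding s_def by (metis sum_nonneg zero_le_power2 order.not_eq_order_implies_strict)
    then have b0: "\<And>j. j < m \<Longrightarrow> b j = 0" unfolding s_def
      by (subst (asm) sum_nonneg_eq_0_iff) auto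
    have "\<And>g. ?X g = 0" by (rule sum.neutral) (auto simp: b0)
    then show ?thesis using \<open>s = 0\<close> by (simp add: power_0_left)
  next
    case True
    let ?f = "normal_density 0 (sqrt s)"
    have D: "distributed (gauss_vec m) lborel ?X ?f"
      using gv_lin_distr[of b m] True unfolding s_def by simp
    have sp: "0 < sqrt s" using True by (rule real_sqrt_gt_zero)
    have int: "integrable (gauss_vec m) (\<lambda>g. ?X g ^ k)" for k
    proof -
      have "integrable lborel (\<lambda>x. ?f x * (x - 0)^k)" using sp by (intro integrable_normal_moment)
      then show ?thesis
        using distributed_integrable[OF D, of "\<lambda>x. x ^ k"] by simp
    qed
    have I: "(\<integral>g. ?X g ^ k \<partial>gauss_vec m) = (\<integral>x. ?f x * x ^ k \<partial>lborel)" for k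
      using distributed_integral[OF D, of "\<lambda>x. x ^ k"] by simp
    have m1: "(\<integral>x. ?f x * x ^ 1 \<partial>lborel) = 0"
      using integral_normal_moment_odd[of "sqrt s" 0 0] sp by simp
    have m2: "(\<integral>x. ?f x * x ^ 2 \<partial>lborel) = s"
      using integral_normal_moment_even[of "sqrt s" 0 1] sp True by simp
    have m4: "(\<integral>x. ?f x * x ^ 4 \<partial>lborel) = 3 * s^2"
      using integral_normal_moment_even[of "sqrt s" 0 2] sp True
      by (simp add: fact_numeral power2_eq_square field_simps)
    show ?thesis using int I[of 1] I[of 2] I[of 4] m1 m2 m4 by simp
  qed
  then show "integrable (gauss_vec m) (\<lambda>g. (\<Sum>j<m. b j * g j) ^ k)"
    and "(\<integral>g. (\<Sum>j<m. b j * g j) \<partial>gauss_vec m) = 0"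
    and "(\<integral>g. (\<Sum>j<m. b j * g j)^2 \<partial>gauss_vec m) = s"
    and "(\<integral>g. (\<Sum>j<m. b j * g j)^4 \<partial>gauss_vec m) = 3 * s^2" by auto
qed

lemma young2:
  fixes d v \<mu> :: real
  assumes "\<mu> > 0"
  shows "d * v \<le> \<mu> * d\<^sup>2 / 2 + v\<^sup>2 / (2 * \<mu>)"
proof -
  have "0 \<le> (\<mu> * d - v)\<^sup>2" by simp
  then have "2 * \<mu> * (d * v) \<le> \<mu>\<^sup>2 * d\<^sup>2 + v\<^sup>2" by (simp add: power2_eq_square algebra_simps)
  then show ?thesis using assms by (simp add: field_simps power2_eq_square)
qed

lemma coord_incl:
  fixes y v q t \<mu> :: real
  assumes q: "q > 0" and t: "0 \<le> t" "t \<le> q * \<bar>y\<bar>" "q * \<bar>y\<bar> < t + 1" and mu: "\<mu> > 0"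
  shows "(y - (if 0 \<le> y then t else - t) / q) * v \<le> \<mu> * \<bar>y\<bar> / (2 * q) + v\<^sup>2 / (2 * \<mu>)"
proof -
  define d where "d = y - (if 0 \<le> y then t else - t) / q"
  have ad: "\<bar>d\<bar> = \<bar>y\<bar> - t / q"
  proof (cases "0 \<le> y")
    case True
    have "t / q \<le> y" using t True q by (simp add: field_simps)
    then show ?thesis using True by (simp add: d_def)
  next
    case False
    have "t / q \<le> - y" using t False q by (simp add: field_simps)
    then show ?thesis using False by (simp add: d_def)
  qed
  have d1: "\<bar>d\<bar> \<le> 1 / q" using ad t q by (simp add: field_simps)
  have "0 \<le> t / q" using t q by simp
  then have d2: "\<bar>d\<bar> \<le> \<bar>y\<bar>" using ad by linarith
  have "d\<^sup>2 = \<bar>d\<bar> * \<bar>d\<bar>" by (simp add: power2_eq_square)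
  also have "\<dots> \<le> \<bar>y\<bar> * (1 / q)" by (intro mult_mono d1 d2) auto
  finally have dd: "d\<^sup>2 \<le> \<bar>y\<bar> / q" by simp
  have "d * v \<le> \<mu> * d\<^sup>2 / 2 + v\<^sup>2 / (2 * \<mu>)" by (rule young2[OF mu])
  also have "\<dots> \<le> \<mu> * (\<bar>y\<bar> / q) / 2 + v\<^sup>2 / (2 * \<mu>)"
    using dd mu by (intro add_right_mono divide_right_mono mult_left_mono) auto
  finally show ?thesis by (simp add: d_def)
qed

lemma coord_excl:
  fixes y v q \<rho> lam :: real
  assumes q: "q > 0" and rho: "\<rho> > 0" and yr: "\<bar>y\<bar> * \<rho> * q^3 \<le> 1" and la: "lam > 0"
  shows "y * v \<le> lam * \<bar>y\<bar> / q + v^4 / (\<rho> * lam^3)"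
proof (cases "\<bar>v\<bar> \<le> lam / q")
  case True
  have "y * v \<le> \<bar>y\<bar> * \<bar>v\<bar>" by (simp add: abs_mult[symmetric])
  also have "\<dots> \<le> \<bar>y\<bar> * (lam / q)" by (intro mult_left_mono True) auto
  finally have "y * v \<le> lam * \<bar>y\<bar> / q" by (simp add: mult.commute)
  moreover have "0 \<le> v^4 / (\<rho> * lam^3)" using rho la by (intro divide_nonneg_pos) (auto simp: zero_le_even_power)
  ultimately show ?thesis by linarith
next
  case False
  then have vl: "lam / q < \<bar>v\<bar>" by simp
  have lq: "0 < lam / q" using la q by simp
  have c3: "(lam / q)^3 \<le> \<bar>v\<bar>^3" using vl lq by (intro power_mono) auto
  have "y * v \<le> \<bar>y\<bar> * \<bar>v\<bar>" by (simp add: abs_mult[symmetric])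
  also have "\<bar>y\<bar> * \<bar>v\<bar> = \<bar>y\<bar> * \<bar>v\<bar>^4 / \<bar>v\<bar>^3" using vl lq by (simp add: power_eq_if)
  also have "\<dots> \<le> \<bar>y\<bar> * \<bar>v\<bar>^4 / (lam / q)^3"
    using c3 lq by (intro divide_left_mono) (auto intro!: mult_pos_pos)
  also have "\<dots> = (\<bar>y\<bar> * q^3) * v^4 / lam^3"
    using q by (simp add: power_divide field_simps power_abs)
  also have "\<dots> \<le> (1 / \<rho>) * v^4 / lam^3"
  proof -
    have "\<bar>y\<bar> * q^3 \<le> 1 / \<rho>" using yr rho by (simp add: field_simps)
    then show ?thesis using la by (intro divide_right_mono mult_right_mono) (auto simp: zero_le_even_power)
  qed
  also have "\<dots> = v^4 / (\<rho> * lam^3)" by simp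
  also have "\<dots> \<le> lam * \<bar>y\<bar> / q + v^4 / (\<rho> * lam^3)" using la q by simp
  finally show ?thesis .
qed


definition kf :: "real \<Rightarrow> real \<Rightarrow> real \<Rightarrow> int" where
  "kf p r y = (if 1 \<le> p * r * (of_int \<lfloor>sqrt p * \<bar>y\<bar>\<rfloor> + 1)
     then (if 0 \<le> y then \<lfloor>sqrt p * \<bar>y\<bar>\<rfloor> else - \<lfloor>sqrt p * \<bar>y\<bar>\<rfloor>) else 0)"

lemma kf_cases:
  assumes "p \<ge> 0"
  shows "kf p r y = 0 \<or> (\<bar>kf p r y\<bar> = \<lfloor>sqrt p * \<bar>y\<bar>\<rfloor> \<and> 1 \<le> p * r * (of_int \<lfloor>sqrt p * \<bar>y\<bar>\<rfloor> + 1))"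
proof -
  have "0 \<le> \<lfloor>sqrt p * \<bar>y\<bar>\<rfloor>" using assms by simp
  then show ?thesis unfolding kf_def by (simp only: split: if_split) auto
qed

lemma kf_abs: "p \<ge> 1 \<Longrightarrow> \<bar>of_int (kf p r y)\<bar> \<le> sqrt p * \<bar>y\<bar>"
proof -
  assume p: "p \<ge> 1"
  have "of_int \<lfloor>sqrt p * \<bar>y\<bar>\<rfloor> \<le> sqrt p * \<bar>y\<bar>" by (rule of_int_floor_le)
  moreover have "0 \<le> sqrt p * \<bar>y\<bar>" using p by simp
  ultimately show ?thesis using kf_cases[of p r y] p
    by (auto simp del: of_int_abs simp: of_int_abs[symmetric])
qed

lemma kf_cond: "p \<ge> 0 \<Longrightarrow> kf p r y \<noteq> 0 \<Longrightarrow> 1 \<le> p * r * (\<bar>of_int (kf p r y)\<bar> + 1)"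
  using kf_cases[of p r y] by (auto simp del: of_int_abs simp: of_int_abs[symmetric])

lemma coord_all:
  fixes p r y v \<mu> lam :: real
  assumes p: "p \<ge> 1" and r: "r \<ge> 0" and rv: "r = 0 \<Longrightarrow> v = 0" and mu: "\<mu> > 0" and la: "lam > 0"
  shows "(y - of_int (kf p r y) / sqrt p) * v
     \<le> (\<mu> / 2 + lam) * \<bar>y\<bar> / sqrt p + v\<^sup>2 / (2 * \<mu>) + v^4 / (r * lam^3)"
proof -
  define q where "q = sqrt p"
  have q: "q > 0" using p by (simp add: q_def)
  have qq: "q * q = p" using p by (simp add: q_def)
  define t :: real where "t = of_int \<lfloor>q * \<bar>y\<bar>\<rfloor>"
  have t0: "0 \<le> t" unfolding t_def using q by simp
  have t1: "t \<le> q * \<bar>y\<bar>" unfolding t_def by simp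
  have t2: "q * \<bar>y\<bar> < t + 1" unfolding t_def by linarith
  have nn1: "0 \<le> v^4 / (r * lam^3)" using r la by (auto intro!: divide_nonneg_nonneg simp: zero_le_even_power)
  have nn2: "0 \<le> v\<^sup>2 / (2 * \<mu>)" using mu by simp
  have nn3: "0 \<le> \<mu> * \<bar>y\<bar> / q" "0 \<le> lam * \<bar>y\<bar> / q" using mu la q by auto
  show ?thesis
  proof (cases "1 \<le> p * r * (t + 1)")
    case True
    have k: "of_int (kf p r y) = (if 0 \<le> y then t else - t)"
      using True unfolding kf_def t_def q_def by auto
    have "(y - (if 0 \<le> y then t else - t) / q) * v \<le> \<mu> * \<bar>y\<bar> / (2 * q) + v\<^sup>2 / (2 * \<mu>)"
      by (rule coord_incl[OF q t0 t1 t2 mu])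
    moreover have "(\<mu> / 2 + lam) * \<bar>y\<bar> / q = \<mu> * \<bar>y\<bar> / (2 * q) + lam * \<bar>y\<bar> / q"
      using q by (simp add: field_simps)
    ultimately show ?thesis using k nn1 nn3 unfolding q_def by (simp add: q_def)
  next
    case False
    have k: "kf p r y = 0" using False unfolding kf_def t_def q_def by auto
    show ?thesis
    proof (cases "r = 0")
      case True
      have "0 \<le> (\<mu> / 2 + lam) * \<bar>y\<bar> / sqrt p" using mu la p by simp
      then show ?thesis using True rv k by simp
    next
      case False
      then have rp: "r > 0" using r by simp
      have "\<bar>y\<bar> * r * q^3 = (q * \<bar>y\<bar>) * (p * r)" using qq by (simp add: power3_eq_cube algebra_simps)
      also have "\<dots> \<le> (t + 1) * (p * r)" using t2 rp p by (intro mult_right_mono) auto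
      also have "\<dots> \<le> 1" using \<open>\<not> 1 \<le> p * r * (t + 1)\<close> by (simp add: algebra_simps)
      finally have yr: "\<bar>y\<bar> * r * q^3 \<le> 1" .
      have "y * v \<le> lam * \<bar>y\<bar> / q + v^4 / (r * lam^3)" by (rule coord_excl[OF q rp yr la])
      moreover have "(\<mu> / 2 + lam) * \<bar>y\<bar> / q = \<mu> * \<bar>y\<bar> / (2 * q) + lam * \<bar>y\<bar> / q"
        using q by (simp add: field_simps)
      moreover have "0 \<le> \<mu> * \<bar>y\<bar> / (2 * q)" using mu q by simp
      ultimately show ?thesis using k nn2 unfolding q_def by simp
    qed
  qed
qed


lemma center_bound:
  fixes p \<mu> lam :: real and u w v r :: "nat \<Rightarrow> real"
  assumes p: "p \<ge> 1" and u: "u \<in> ball2 n" and w: "w \<in> ball1 n"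
    and r: "\<And>i. i < n \<Longrightarrow> 0 \<le> r i" and rv: "\<And>i. i < n \<Longrightarrow> r i = 0 \<Longrightarrow> v i = 0"
    and mu: "\<mu> > 0" and la: "lam > 0"
  shows "(\<Sum>i<n. (u i + sqrt p * w i) * v i)
     \<le> (\<Sum>i<n. of_int (kf p (r i) (sqrt p * w i)) / sqrt p * v i) + \<mu> + lam
        + (\<Sum>i<n. (v i)\<^sup>2) / \<mu> + (\<Sum>i<n. v i ^ 4 / (r i * lam ^ 3))"
proof -
  let ?c = "\<lambda>i. of_int (kf p (r i) (sqrt p * w i)) / sqrt p"
  have sp: "sqrt p > 0" using p by simp
  have u2: "(\<Sum>i<n. (u i)\<^sup>2) \<le> 1" using u by (simp add: ball2_def)
  have w1: "(\<Sum>i<n. \<bar>w i\<bar>) \<le> 1" using w by (simp add: ball1_def)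
  have A: "(\<Sum>i<n. u i * v i) \<le> \<mu> / 2 + (\<Sum>i<n. (v i)\<^sup>2) / (2 * \<mu>)"
  proof -
    have "(\<Sum>i<n. u i * v i) \<le> (\<Sum>i<n. \<mu> * (u i)\<^sup>2 / 2 + (v i)\<^sup>2 / (2 * \<mu>))"
      by (intro sum_mono young2 mu)
    also have "\<dots> = \<mu> / 2 * (\<Sum>i<n. (u i)\<^sup>2) + (\<Sum>i<n. (v i)\<^sup>2) / (2 * \<mu>)"
      by (simp add: sum.distrib sum_distrib_left sum_divide_distrib)
    also have "\<dots> \<le> \<mu> / 2 + (\<Sum>i<n. (v i)\<^sup>2) / (2 * \<mu>)"
      using u2 mu by (simp add: mult_left_le)
    finally show ?thesis .
  qed
  have B: "(\<Sum>i<n. (sqrt p * w i - ?c i) * v i) \<le>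
      (\<mu> / 2 + lam) + (\<Sum>i<n. (v i)\<^sup>2) / (2 * \<mu>) + (\<Sum>i<n. v i ^ 4 / (r i * lam ^ 3))"
  proof -
    have "(\<Sum>i<n. (sqrt p * w i - ?c i) * v i) \<le>
        (\<Sum>i<n. (\<mu> / 2 + lam) * \<bar>w i\<bar> + (v i)\<^sup>2 / (2 * \<mu>) + v i ^ 4 / (r i * lam ^ 3))"
    proof (rule sum_mono)
      fix i assume "i \<in> {..<n}"
      then have i: "i < n" by simp
      have "(sqrt p * w i - ?c i) * v i \<le> (\<mu> / 2 + lam) * \<bar>sqrt p * w i\<bar> / sqrt p
           + (v i)\<^sup>2 / (2 * \<mu>) + v i ^ 4 / (r i * lam ^ 3)"
        by (rule coord_all[OF p r[OF i] rv[OF i] mu la])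
      also have "(\<mu> / 2 + lam) * \<bar>sqrt p * w i\<bar> / sqrt p = (\<mu> / 2 + lam) * \<bar>w i\<bar>"
        using sp by (simp add: abs_mult)
      finally show "(sqrt p * w i - ?c i) * v i \<le>
          (\<mu> / 2 + lam) * \<bar>w i\<bar> + (v i)\<^sup>2 / (2 * \<mu>) + v i ^ 4 / (r i * lam ^ 3)" .
    qed
    also have "\<dots> = (\<mu> / 2 + lam) * (\<Sum>i<n. \<bar>w i\<bar>) + (\<Sum>i<n. (v i)\<^sup>2) / (2 * \<mu>)
                  + (\<Sum>i<n. v i ^ 4 / (r i * lam ^ 3))"
      by (simp add: sum.distrib sum_distrib_left sum_divide_distrib)
    also have "\<dots> \<le> (\<mu> / 2 + lam) + (\<Sum>i<n. (v i)\<^sup>2) / (2 * \<mu>) + (\<Sum>i<n. v i ^ 4 / (r i * lam ^ 3))"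
      using w1 mu la by (simp add: mult_left_le)
    finally show ?thesis .
  qed
  have E: "(\<Sum>i<n. (u i + sqrt p * w i) * v i) =
      (\<Sum>i<n. ?c i * v i) + (\<Sum>i<n. u i * v i) + (\<Sum>i<n. (sqrt p * w i - ?c i) * v i)"
    by (simp add: sum.distrib[symmetric] algebra_simps)
  have F: "(\<Sum>i<n. (v i)\<^sup>2) / (2 * \<mu>) + (\<Sum>i<n. (v i)\<^sup>2) / (2 * \<mu>) = (\<Sum>i<n. (v i)\<^sup>2) / \<mu>"
    using mu by (simp add: field_simps)
  show ?thesis using A B E F by linarith
qed

definition Bset :: "real \<Rightarrow> real \<Rightarrow> int set" where
  "Bset p r = {k. \<bar>of_int k\<bar> \<le> p \<and> (k = 0 \<or> 1 \<le> p * r * (\<bar>of_int k\<bar> + 1))}"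

definition Phi :: "real \<Rightarrow> nat \<Rightarrow> (nat \<Rightarrow> real) \<Rightarrow> (nat \<Rightarrow> int) set" where
  "Phi p n r = {k \<in> PiE {..<n} (\<lambda>i. Bset p (r i)). (\<Sum>i<n. \<bar>of_int (k i)\<bar>) \<le> p}"

lemma kf_mem:
  assumes p: "p \<ge> 1" and w: "w \<in> ball1 n"
  shows "restrict (\<lambda>i. kf p (r i) (sqrt p * w i)) {..<n} \<in> Phi p n r"
proof -
  have w1: "(\<Sum>i<n. \<bar>w i\<bar>) \<le> 1" using w by (simp add: ball1_def)
  have kb: "\<bar>of_int (kf p (r i) (sqrt p * w i))\<bar> \<le> p * \<bar>w i\<bar>" for i
  proof -
    have "\<bar>of_int (kf p (r i) (sqrt p * w i))\<bar> \<le> sqrt p * \<bar>sqrt p * w i\<bar>" by (rule kf_abs[OF p])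
    also have "\<dots> = p * \<bar>w i\<bar>" using p by (simp add: abs_mult mult.assoc[symmetric])
    finally show ?thesis .
  qed
  have wi: "\<bar>w i\<bar> \<le> 1" if "i < n" for i
  proof -
    have "\<bar>w i\<bar> \<le> (\<Sum>i<n. \<bar>w i\<bar>)" using that by (intro member_le_sum) auto
    then show ?thesis using w1 by simp
  qed
  have mem: "kf p (r i) (sqrt p * w i) \<in> Bset p (r i)" if "i < n" for i
  proof -
    have "p * \<bar>w i\<bar> \<le> p" using wi[OF that] p by (simp add: mult_left_le)
    then have "\<bar>of_int (kf p (r i) (sqrt p * w i))\<bar> \<le> p" using kb[of i] by linarith
    then show ?thesis using kf_cond[of p "r i" "sqrt p * w i"] p unfolding Bset_def by auto
  qed
  have "(\<Sum>i<n. \<bar>of_int (kf p (r i) (sqrt p * w i)) :: real\<bar>) \<le> (\<Sum>i<n. p * \<bar>w i\<bar>)"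
    by (intro sum_mono kb)
  also have "\<dots> \<le> p" using w1 p by (simp add: sum_distrib_left[symmetric] mult_left_le)
  finally show ?thesis unfolding Phi_def using mem by auto
qed

lemma geo_sum_int:
  "(\<Sum>k\<in>{- int N..int N}. (real (nat \<bar>k\<bar>) + 1) * (1/2) ^ nat \<bar>k\<bar>) = 7 - 2 * (real N + 3) / 2 ^ N"
proof (induction N)
  case 0
  then show ?case by simp
next
  case (Suc N)
  have S: "{- int (Suc N)..int (Suc N)} = insert (- int N - 1) (insert (int N + 1) {- int N..int N})"
    by auto
  have "(\<Sum>k\<in>{- int (Suc N)..int (Suc N)}. (real (nat \<bar>k\<bar>) + 1) * (1/2) ^ nat \<bar>k\<bar>)
      = 2 * ((real N + 2) * (1/2) ^ (Suc N)) + (\<Sum>k\<in>{- int N..int N}. (real (nat \<bar>k\<bar>) + 1) * (1/2) ^ nat \<bar>k\<bar>)"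
  proof -
    have a: "nat \<bar>- int N - 1\<bar> = Suc N" "nat \<bar>int N + 1\<bar> = Suc N"
      "nat (1 + int N) = Suc N" "nat (int N + 1) = Suc N" by auto
    show ?thesis unfolding S by (simp add: a del: power_Suc)
  qed
  also have "\<dots> = 7 - 2 * (real (Suc N) + 3) / 2 ^ (Suc N)"
    using Suc by (simp add: field_simps power_divide)
  finally show ?case .
qed

lemma geo_sum_le: "(\<Sum>k\<in>{- int N..int N}. (real (nat \<bar>k\<bar>) + 1) * (1/2) ^ nat \<bar>k\<bar>) \<le> 7"
  unfolding geo_sum_int by simp

lemma Bset_sub: "Bset p r \<subseteq> {- int (nat \<lceil>p\<rceil>)..int (nat \<lceil>p\<rceil>)}"
proof
  fix k assume "k \<in> Bset p r"
  then have "\<bar>of_int k\<bar> \<le> p" by (simp add: Bset_def)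
  then have kp: "\<bar>k\<bar> \<le> \<lceil>p\<rceil>" by linarith
  then have "int (nat \<lceil>p\<rceil>) = \<lceil>p\<rceil>" by linarith
  then show "k \<in> {- int (nat \<lceil>p\<rceil>)..int (nat \<lceil>p\<rceil>)}" using kp by auto
qed

lemma Bset_fin: "finite (Bset p r)"
  using Bset_sub by (rule finite_subset) simp

lemma Bset_sum:
  assumes p: "p \<ge> 1" and r: "r \<ge> 0"
  shows "(\<Sum>k\<in>Bset p r. (1/2::real) ^ nat \<bar>k\<bar>) \<le> 1 + 7 * p * r"
proof -
  define N where "N = nat \<lceil>p\<rceil>"
  let ?g = "\<lambda>k::int. (real (nat \<bar>k\<bar>) + 1) * (1/2::real) ^ nat \<bar>k\<bar>"
  have "(\<Sum>k\<in>Bset p r. (1/2::real) ^ nat \<bar>k\<bar>) \<le> (\<Sum>k\<in>Bset p r. (if k = 0 then 1 else 0) + p * r * ?g k)"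
  proof (rule sum_mono)
    fix k assume k: "k \<in> Bset p r"
    show "(1/2::real) ^ nat \<bar>k\<bar> \<le> (if k = 0 then 1 else 0) + p * r * ?g k"
    proof (cases "k = 0")
      case True
      then show ?thesis using p r by simp
    next
      case False
      then have c: "1 \<le> p * r * (\<bar>of_int k\<bar> + 1)" using k by (simp add: Bset_def)
      have e: "real (nat \<bar>k\<bar>) = \<bar>of_int k\<bar>" by simp
      have "0 \<le> (1/2::real) ^ nat \<bar>k\<bar>" by simp
      from mult_right_mono[OF c this]
      have "(1/2::real) ^ nat \<bar>k\<bar> \<le> (p * r * (\<bar>of_int k\<bar> + 1)) * (1/2) ^ nat \<bar>k\<bar>"
        by simp
      then show ?thesis using False by (simp add: e mult.assoc)
    qed
  qed
  also have "\<dots> = (\<Sum>k\<in>Bset p r. (if k = 0 then 1 else 0)) + p * r * (\<Sum>k\<in>Bset p r. ?g k)"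
    by (simp add: sum.distrib sum_distrib_left)
  also have "\<dots> \<le> 1 + p * r * 7"
  proof (rule add_mono)
    show "(\<Sum>k\<in>Bset p r. (if k = 0 then 1 else 0)) \<le> (1::real)"
      using Bset_fin[of p r] by (simp add: sum.If_cases)
    have "(\<Sum>k\<in>Bset p r. ?g k) \<le> (\<Sum>k\<in>{- int N..int N}. ?g k)"
      using Bset_sub[of p r] unfolding N_def by (intro sum_mono2) auto
    also have "\<dots> \<le> 7" by (rule geo_sum_le)
    finally show "p * r * (\<Sum>k\<in>Bset p r. ?g k) \<le> p * r * 7"
      using p r by (intro mult_left_mono) auto
  qed
  also have "\<dots> = 1 + 7 * p * r" by (simp add: mult_ac)
  finally show ?thesis .
qed

lemma Phi_fin: "finite (Phi p n r)"
proof -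
  have "finite (PiE {..<n} (\<lambda>i. Bset p (r i)))" by (intro finite_PiE Bset_fin) auto
  then show ?thesis unfolding Phi_def by simp
qed

lemma Phi_card:
  assumes p: "p \<ge> 1" and r: "\<And>i. 0 \<le> r i" and rs: "(\<Sum>i<n. r i) \<le> 1"
  shows "real (card (Phi p n r)) \<le> exp (8 * p)"
proof -
  let ?f = "\<lambda>k::nat\<Rightarrow>int. (\<Prod>i<n. (1/2::real) ^ nat \<bar>k i\<bar>)"
  have one: "1 \<le> 2 powr p * ?f k" if k: "k \<in> Phi p n r" for k
  proof -
    define s where "s = (\<Sum>i<n. nat \<bar>k i\<bar>)"
    have fk0: "?f k = (1/2) ^ s" unfolding s_def power_sum by (rule refl)
    have fk: "?f k = 1 / 2 ^ s" unfolding fk0 by (simp add: power_one_over)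
    have "real s = (\<Sum>i<n. \<bar>of_int (k i)\<bar>)" unfolding s_def by simp
    then have sp: "real s \<le> p" using k by (simp add: Phi_def)
    have "2 ^ s = 2 powr real s" by (simp add: powr_realpow)
    also have "\<dots> \<le> 2 powr p" using sp by (intro powr_mono) auto
    finally show ?thesis unfolding fk by (simp add: field_simps)
  qed
  have "real (card (Phi p n r)) = (\<Sum>k\<in>Phi p n r. 1)" by simp
  also have "\<dots> \<le> (\<Sum>k\<in>Phi p n r. 2 powr p * ?f k)" by (intro sum_mono one)
  also have "\<dots> \<le> (\<Sum>k\<in>PiE {..<n} (\<lambda>i. Bset p (r i)). 2 powr p * ?f k)"
  proof -
    have sub: "Phi p n r \<subseteq> PiE {..<n} (\<lambda>i. Bset p (r i))" unfolding Phi_def by blast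
    have fin: "finite (PiE {..<n} (\<lambda>i. Bset p (r i)))" by (intro finite_PiE) (auto simp: Bset_fin)
    have nn: "0 \<le> 2 powr p * ?f k" for k by (intro mult_nonneg_nonneg prod_nonneg) auto
    show ?thesis by (rule sum_mono2[OF fin sub nn])
  qed
  also have "\<dots> = 2 powr p * (\<Prod>i<n. \<Sum>k\<in>Bset p (r i). (1/2::real) ^ nat \<bar>k\<bar>)"
  proof -
    have "(\<Prod>i<n. \<Sum>k\<in>Bset p (r i). (1/2::real) ^ nat \<bar>k\<bar>) =
        (\<Sum>k\<in>PiE {..<n} (\<lambda>i. Bset p (r i)). ?f k)"
      by (rule prod_sum_PiE) (auto simp: Bset_fin)
    then show ?thesis by (simp only: sum_distrib_left)
  qed
  also have "\<dots> \<le> 2 powr p * (\<Prod>i<n. exp (7 * p * r i))"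
  proof (intro mult_left_mono prod_mono conjI)
    fix i assume "i \<in> {..<n}"
    show "0 \<le> (\<Sum>k\<in>Bset p (r i). (1/2::real) ^ nat \<bar>k\<bar>)" by (intro sum_nonneg) auto
    have "(\<Sum>k\<in>Bset p (r i). (1/2::real) ^ nat \<bar>k\<bar>) \<le> 1 + 7 * p * r i" by (rule Bset_sum[OF p r])
    also have "\<dots> \<le> exp (7 * p * r i)" by (rule exp_ge_add_one_self)
    finally show "(\<Sum>k\<in>Bset p (r i). (1/2::real) ^ nat \<bar>k\<bar>) \<le> exp (7 * p * r i)" .
  qed auto
  also have "\<dots> = 2 powr p * exp (7 * p * (\<Sum>i<n. r i))"
    by (simp only: exp_sum[OF finite_lessThan, symmetric] sum_distrib_left)
  also have "\<dots> \<le> exp p * exp (7 * p)"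
  proof (rule mult_mono)
    have "2 powr p = exp (p * ln 2)" by (simp add: powr_def)
    also have "\<dots> \<le> exp p" using ln_2_less_1 p by (simp add: mult_left_le)
    finally show "2 powr p \<le> exp p" .
    show "exp (7 * p * (\<Sum>i<n. r i)) \<le> exp (7 * p)" using rs p by (simp add: mult_left_le)
  qed auto
  also have "\<dots> = exp (8 * p)" by (simp add: exp_add[symmetric])
  finally show ?thesis .
qed

lemma dense_countable:
  fixes P :: "(nat \<Rightarrow> real) set" and n :: nat
  shows "\<exists>D. countable D \<and> D \<subseteq> P \<and> (\<forall>x\<in>P. \<forall>e>0. \<exists>d\<in>D. \<forall>i<n. \<bar>x i - d i\<bar> < e)"
proof -
  define Q where "Q = (\<lambda>(k::nat, q::rat list). \<exists>x\<in>P. \<forall>i<n. \<bar>x i - of_rat (q!i)\<bar> < 1 / Suc k)"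
  define pick where "pick = (\<lambda>(k::nat, q::rat list). SOME x. x \<in> P \<and> (\<forall>i<n. \<bar>x i - of_rat (q!i)\<bar> < 1 / Suc k))"
  define D where "D = pick ` {kq. Q kq}"
  have cD: "countable D" unfolding D_def by (intro countable_image) simp
  have pk: "pick (k, q) \<in> P \<and> (\<forall>i<n. \<bar>pick (k, q) i - of_rat (q!i)\<bar> < 1 / Suc k)" if "Q (k, q)" for k q
  proof -
    from that obtain x where "x \<in> P \<and> (\<forall>i<n. \<bar>x i - of_rat (q!i)\<bar> < 1 / Suc k)"
      unfolding Q_def by auto
    then have "\<exists>x. x \<in> P \<and> (\<forall>i<n. \<bar>x i - of_rat (q!i)\<bar> < 1 / Suc k)" by blast
    then show ?thesis unfolding pick_def prod.case by (rule someI_ex)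
  qed
  have sub: "D \<subseteq> P" unfolding D_def using pk by auto
  have dens: "\<exists>d\<in>D. \<forall>i<n. \<bar>x i - d i\<bar> < e" if x: "x \<in> P" and e: "e > 0" for x e
  proof -
    obtain k :: nat where k: "2 / e < real k" using reals_Archimedean2 by blast
    define \<delta> where "\<delta> = 1 / real (Suc k)"
    have dpos: "\<delta> > 0" unfolding \<delta>_def by simp
    have de: "2 * \<delta> < e"
    proof -
      have "2 / e < real (Suc k)" using k by simp
      then have "2 < e * real (Suc k)" using e by (simp add: field_simps)
      then show ?thesis unfolding \<delta>_def using e by (simp add: field_simps)
    qed
    have ex: "\<exists>q::rat. \<bar>x i - of_rat q\<bar> < \<delta>" for i
    proof -
      obtain r where r: "r \<in> \<rat>" "x i - \<delta> < r" "r < x i + \<delta>"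
        using Rats_dense_in_real[of "x i - \<delta>" "x i + \<delta>"] dpos by auto
      from r(1) obtain q where "r = of_rat q" by (auto elim: Rats_cases)
      then show ?thesis using r by (intro exI[of _ q]) auto
    qed
    define q where "q = map (\<lambda>i. SOME q::rat. \<bar>x i - of_rat q\<bar> < \<delta>) [0..<n]"
    have qi: "\<bar>x i - of_rat (q!i)\<bar> < \<delta>" if "i < n" for i
      unfolding q_def using that someI_ex[OF ex[of i]] by simp
    have "Q (k, q)" unfolding Q_def using x qi by (auto simp: \<delta>_def)
    then have d: "pick (k, q) \<in> D" "\<forall>i<n. \<bar>pick (k, q) i - of_rat (q!i)\<bar> < \<delta>"
      using pk[of k q] unfolding D_def by (auto simp: \<delta>_def)
    have "\<forall>i<n. \<bar>x i - pick (k, q) i\<bar> < e"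
    proof (intro allI impI)
      fix i assume i: "i < n"
      have "\<bar>x i - pick (k, q) i\<bar> \<le> \<bar>x i - of_rat (q!i)\<bar> + \<bar>pick (k, q) i - of_rat (q!i)\<bar>" by linarith
      also have "\<dots> < 2 * \<delta>" using qi[OF i] d(2) i by auto
      finally show "\<bar>x i - pick (k, q) i\<bar> < e" using de by linarith
    qed
    then show ?thesis using d(1) by blast
  qed
  show ?thesis using cD sub dens by blast
qed

lemma sup_dense:
  fixes P D :: "(nat \<Rightarrow> real) set" and V :: "nat \<Rightarrow> real"
  assumes sub: "D \<subseteq> P" and dens: "\<forall>x\<in>P. \<forall>e>0. \<exists>d\<in>D. \<forall>i<n. \<bar>x i - d i\<bar> < e"
    and ne: "P \<noteq> {}" and bdd: "bdd_above ((\<lambda>x. \<Sum>i<n. x i * V i) ` P)"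
  shows "Sup ((\<lambda>x. \<Sum>i<n. x i * V i) ` P) = Sup ((\<lambda>x. \<Sum>i<n. x i * V i) ` D)"
proof -
  let ?L = "\<lambda>x. \<Sum>i<n. x i * V i"
  have neD: "D \<noteq> {}"
  proof -
    obtain x where "x \<in> P" using ne by blast
    then obtain d where "d \<in> D" using dens by (meson zero_less_one)
    then show ?thesis by blast
  qed
  have bddD: "bdd_above (?L ` D)" using bdd sub by (meson bdd_above_mono image_mono)
  show ?thesis
  proof (rule antisym)
    show "Sup (?L ` P) \<le> Sup (?L ` D)"
    proof (rule cSup_least)
      show "?L ` P \<noteq> {}" using ne by simp
      fix y assume "y \<in> ?L ` P"
      then obtain x where x: "x \<in> P" and y: "y = ?L x" by auto
      show "y \<le> Sup (?L ` D)"
      proof (rule field_le_epsilon)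
        fix \<epsilon> :: real assume \<epsilon>: "0 < \<epsilon>"
        define c where "c = (\<Sum>i<n. \<bar>V i\<bar>) + 1"
        have c: "c > 0" unfolding c_def by (simp add: sum_nonneg add_nonneg_pos)
        obtain d where d: "d \<in> D" "\<forall>i<n. \<bar>x i - d i\<bar> < \<epsilon> / c"
        proof -
          have "\<epsilon> / c > 0" using \<epsilon> c by simp
          then show ?thesis using dens x that by blast
        qed
        have "?L x - ?L d = (\<Sum>i<n. (x i - d i) * V i)" by (simp add: sum_subtractf algebra_simps)
        also have "\<dots> \<le> (\<Sum>i<n. \<epsilon> / c * \<bar>V i\<bar>)"
        proof (rule sum_mono)
          fix i assume "i \<in> {..<n}"
          then have "\<bar>x i - d i\<bar> \<le> \<epsilon> / c" using d by auto
          then have "\<bar>x i - d i\<bar> * \<bar>V i\<bar> \<le> \<epsilon> / c * \<bar>V i\<bar>" by (intro mult_right_mono) auto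
          then show "(x i - d i) * V i \<le> \<epsilon> / c * \<bar>V i\<bar>" by (metis abs_le_D1 abs_mult)
        qed
        also have "\<dots> = \<epsilon> / c * (c - 1)" by (simp add: c_def sum_distrib_left)
        also have "\<dots> \<le> \<epsilon>" using c \<epsilon> by (simp add: field_simps)
        finally have "?L x \<le> ?L d + \<epsilon>" by simp
        moreover have "?L d \<le> Sup (?L ` D)" using d(1) bddD by (intro cSup_upper) auto
        ultimately show "y \<le> Sup (?L ` D) + \<epsilon>" using y by simp
      qed
    qed
    show "Sup (?L ` D) \<le> Sup (?L ` P)"
      using neD bdd sub by (intro cSup_subset_mono) auto
  qed
qed


lemma lin_abs_bound:
  fixes x v :: "nat \<Rightarrow> real" and B :: real
  assumes "\<forall>i<n. \<bar>x i\<bar> \<le> B"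
  shows "\<bar>\<Sum>i<n. x i * v i\<bar> \<le> B * (\<Sum>i<n. \<bar>v i\<bar>)"
proof -
  have "\<bar>\<Sum>i<n. x i * v i\<bar> \<le> (\<Sum>i<n. \<bar>x i * v i\<bar>)" by (rule Groups_Big.sum_abs)
  also have "\<dots> \<le> (\<Sum>i<n. B * \<bar>v i\<bar>)"
    using assms by (intro sum_mono) (auto simp: abs_mult intro!: mult_right_mono)
  finally show ?thesis by (simp add: sum_distrib_left)
qed

lemma sup_bounds:
  fixes P :: "(nat \<Rightarrow> real) set" and v :: "nat \<Rightarrow> real"
  assumes ne: "P \<noteq> {}" and bnd: "\<forall>x\<in>P. \<forall>i<n. \<bar>x i\<bar> \<le> B"
  shows "bdd_above ((\<lambda>x. \<Sum>i<n. x i * v i) ` P)"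
    and "\<bar>Sup ((\<lambda>x. \<Sum>i<n. x i * v i) ` P)\<bar> \<le> B * (\<Sum>i<n. \<bar>v i\<bar>)"
proof -
  let ?L = "\<lambda>x. \<Sum>i<n. x i * v i"
  have b: "\<bar>?L x\<bar> \<le> B * (\<Sum>i<n. \<bar>v i\<bar>)" if "x \<in> P" for x
    using lin_abs_bound bnd that by blast
  show bdd: "bdd_above (?L ` P)"
    using b by (intro bdd_aboveI[of _ "B * (\<Sum>i<n. \<bar>v i\<bar>)"]) (auto simp: abs_le_iff)
  obtain x0 where x0: "x0 \<in> P" using ne by blast
  have up: "Sup (?L ` P) \<le> B * (\<Sum>i<n. \<bar>v i\<bar>)"
    using ne b by (intro cSup_least) (auto simp: abs_le_iff)
  have "?L x0 \<le> Sup (?L ` P)" using x0 bdd by (intro cSup_upper) auto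
  moreover have "- (B * (\<Sum>i<n. \<bar>v i\<bar>)) \<le> ?L x0" using b[OF x0] by (simp add: abs_le_iff)
  ultimately show "\<bar>Sup (?L ` P)\<bar> \<le> B * (\<Sum>i<n. \<bar>v i\<bar>)" using up by (simp add: abs_le_iff)
qed

lemma sup_integrable:
  fixes P :: "(nat \<Rightarrow> real) set" and V :: "nat \<Rightarrow> (nat \<Rightarrow> real) \<Rightarrow> real"
  assumes ne: "P \<noteq> {}" and bnd: "\<forall>x\<in>P. \<forall>i<n. \<bar>x i\<bar> \<le> B" and B: "B \<ge> 0"
    and intV: "\<And>i. i < n \<Longrightarrow> integrable (gauss_vec m) (V i)"
  shows "integrable (gauss_vec m) (\<lambda>g. Sup ((\<lambda>x. \<Sum>i<n. x i * V i g) ` P))"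
proof -
  obtain D where D: "countable D" "D \<subseteq> P" "\<forall>x\<in>P. \<forall>e>0. \<exists>d\<in>D. \<forall>i<n. \<bar>x i - d i\<bar> < e"
    using dense_countable[of P n] by blast
  have eq: "Sup ((\<lambda>x. \<Sum>i<n. x i * V i g) ` P) = (SUP d\<in>D. (\<Sum>i<n. d i * V i g))" for g
    using sup_dense[OF D(2) D(3) ne sup_bounds(1)[OF ne bnd]] by simp
  have measV: "V i \<in> borel_measurable (gauss_vec m)" if "i < n" for i
    using intV[OF that] by (rule borel_measurable_integrable)
  have meas: "(\<lambda>g. SUP d\<in>D. (\<Sum>i<n. d i * V i g)) \<in> borel_measurable (gauss_vec m)"
  proof (rule borel_measurable_cSUP[OF D(1)])
    fix d assume "d \<in> D"
    show "(\<lambda>g. \<Sum>i<n. d i * V i g) \<in> borel_measurable (gauss_vec m)"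
      using measV by (intro borel_measurable_sum borel_measurable_times) auto
  next
    fix g
    have "bdd_above ((\<lambda>x. \<Sum>i<n. x i * V i g) ` P)" by (rule sup_bounds(1)[OF ne bnd])
    then show "bdd_above ((\<lambda>d. \<Sum>i<n. d i * V i g) ` D)"
      using D(2) by (meson bdd_above_mono image_mono)
  qed
  have intB: "integrable (gauss_vec m) (\<lambda>g. B * (\<Sum>i<n. \<bar>V i g\<bar>))"
    using intV by (intro integrable_mult_right integrable_sum integrable_abs) auto
  show ?thesis
  proof (rule Bochner_Integration.integrable_bound[OF intB])
    show "(\<lambda>g. Sup ((\<lambda>x. \<Sum>i<n. x i * V i g) ` P)) \<in> borel_measurable (gauss_vec m)"
      unfolding eq by (rule meas)
    show "AE g in gauss_vec m. norm (Sup ((\<lambda>x. \<Sum>i<n. x i * V i g) ` P)) \<le> norm (B * (\<Sum>i<n. \<bar>V i g\<bar>))"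
    proof (rule AE_I2)
      fix g
      have "0 \<le> B * (\<Sum>i<n. \<bar>V i g\<bar>)" using B by (simp add: sum_nonneg)
      then show "norm (Sup ((\<lambda>x. \<Sum>i<n. x i * V i g) ` P)) \<le> norm (B * (\<Sum>i<n. \<bar>V i g\<bar>))"
        using sup_bounds(2)[OF ne bnd, of "\<lambda>i. V i g"] by simp
    qed
  qed
qed


lemma upper_integral:
  fixes a :: "nat \<Rightarrow> nat \<Rightarrow> real" and z c r :: "nat \<Rightarrow> real" and \<mu> lam :: real and m :: nat
  defines "V \<equiv> \<lambda>i g. \<Sum>j<m. (a i j * z j) * g j"
  defines "s \<equiv> \<lambda>i. \<Sum>j<m. (a i j * z j)\<^sup>2"
  shows "integrable (gauss_vec m) (\<lambda>g. (\<Sum>i<n. c i * V i g) + \<mu> + lam + (\<Sum>i<n. (V i g)\<^sup>2) / \<mu>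
            + (\<Sum>i<n. V i g ^ 4 / (r i * lam ^ 3)))"
    and "(\<integral>g. (\<Sum>i<n. c i * V i g) + \<mu> + lam + (\<Sum>i<n. (V i g)\<^sup>2) / \<mu>
            + (\<Sum>i<n. V i g ^ 4 / (r i * lam ^ 3)) \<partial>gauss_vec m)
         = \<mu> + lam + (\<Sum>i<n. s i) / \<mu> + 3 * (\<Sum>i<n. (s i)\<^sup>2 / r i) / lam ^ 3"
proof -
  interpret prob_space "gauss_vec m" by (rule gv_prob)
  have I1: "integrable (gauss_vec m) (V i)" for i
    using gv_lin_moments(1)[where b="\<lambda>j. a i j * z j" and m=m and k=1] unfolding V_def by simp
  have I2: "integrable (gauss_vec m) (\<lambda>g. (V i g)\<^sup>2)" for i
    using gv_lin_moments(1)[where b="\<lambda>j. a i j * z j" and m=m and k=2] unfolding V_def by simp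
  have I4: "integrable (gauss_vec m) (\<lambda>g. V i g ^ 4)" for i
    using gv_lin_moments(1)[where b="\<lambda>j. a i j * z j" and m=m and k=4] unfolding V_def by simp
  have E1: "(\<integral>g. V i g \<partial>gauss_vec m) = 0" for i
    using gv_lin_moments(2)[where b="\<lambda>j. a i j * z j" and m=m] unfolding V_def by simp
  have E2: "(\<integral>g. (V i g)\<^sup>2 \<partial>gauss_vec m) = s i" for i
    using gv_lin_moments(3)[where b="\<lambda>j. a i j * z j" and m=m] unfolding V_def s_def by simp
  have E4: "(\<integral>g. V i g ^ 4 \<partial>gauss_vec m) = 3 * (s i)\<^sup>2" for i
    using gv_lin_moments(4)[where b="\<lambda>j. a i j * z j" and m=m] unfolding V_def s_def by simp
  have iA: "integrable (gauss_vec m) (\<lambda>g. \<Sum>i<n. c i * V i g)"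
    using I1 by (intro Bochner_Integration.integrable_sum Bochner_Integration.integrable_mult_right) auto
  have iB: "integrable (gauss_vec m) (\<lambda>g. (\<Sum>i<n. (V i g)\<^sup>2) / \<mu>)"
    using I2 by (intro Bochner_Integration.integrable_divide Bochner_Integration.integrable_sum) auto
  have iC: "integrable (gauss_vec m) (\<lambda>g. \<Sum>i<n. V i g ^ 4 / (r i * lam ^ 3))"
    using I4 by (intro Bochner_Integration.integrable_sum Bochner_Integration.integrable_divide) auto
  show "integrable (gauss_vec m) (\<lambda>g. (\<Sum>i<n. c i * V i g) + \<mu> + lam + (\<Sum>i<n. (V i g)\<^sup>2) / \<mu>
            + (\<Sum>i<n. V i g ^ 4 / (r i * lam ^ 3)))"
    using iA iB iC by (intro Bochner_Integration.integrable_add) auto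
  have eA: "(\<integral>g. (\<Sum>i<n. c i * V i g) \<partial>gauss_vec m) = 0"
    using I1 E1 by (simp add: integral_sum)
  have eB: "(\<integral>g. (\<Sum>i<n. (V i g)\<^sup>2) / \<mu> \<partial>gauss_vec m) = (\<Sum>i<n. s i) / \<mu>"
    using I2 E2 by (simp add: integral_sum)
  have eC: "(\<integral>g. (\<Sum>i<n. V i g ^ 4 / (r i * lam ^ 3)) \<partial>gauss_vec m) = 3 * (\<Sum>i<n. (s i)\<^sup>2 / r i) / lam ^ 3"
  proof -
    have "(\<integral>g. (\<Sum>i<n. V i g ^ 4 / (r i * lam ^ 3)) \<partial>gauss_vec m) = (\<Sum>i<n. 3 * (s i)\<^sup>2 / (r i * lam ^ 3))"
      using I4 E4 by (simp add: integral_sum)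
    also have "\<dots> = 3 * (\<Sum>i<n. (s i)\<^sup>2 / r i) / lam ^ 3"
      by (simp add: sum_distrib_left sum_divide_distrib)
    finally show ?thesis .
  qed
  have cst: "(\<integral>g. (x::real) \<partial>gauss_vec m) = x" for x by (simp add: prob_space.prob_space[OF gv_prob])
  have ic: "integrable (gauss_vec m) (\<lambda>g. (x::real))" for x by simp
  let ?A = "\<lambda>g. \<Sum>i<n. c i * V i g"
  let ?B = "\<lambda>g. (\<Sum>i<n. (V i g)\<^sup>2) / \<mu>"
  let ?C = "\<lambda>g. \<Sum>i<n. V i g ^ 4 / (r i * lam ^ 3)"
  have j1: "integrable (gauss_vec m) (\<lambda>g. ?A g + \<mu>)" using iA ic by (rule Bochner_Integration.integrable_add)
  have j2: "integrable (gauss_vec m) (\<lambda>g. ?A g + \<mu> + lam)" using j1 ic by (rule Bochner_Integration.integrable_add)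
  have j3: "integrable (gauss_vec m) (\<lambda>g. ?A g + \<mu> + lam + ?B g)" using j2 iB by (rule Bochner_Integration.integrable_add)
  have "(\<integral>g. ?A g + \<mu> + lam + ?B g + ?C g \<partial>gauss_vec m) = (\<integral>g. ?A g + \<mu> + lam + ?B g \<partial>gauss_vec m) + (\<integral>g. ?C g \<partial>gauss_vec m)"
    using j3 iC by (rule Bochner_Integration.integral_add)
  also have "(\<integral>g. ?A g + \<mu> + lam + ?B g \<partial>gauss_vec m) = (\<integral>g. ?A g + \<mu> + lam \<partial>gauss_vec m) + (\<integral>g. ?B g \<partial>gauss_vec m)"
    using j2 iB by (rule Bochner_Integration.integral_add)
  also have "(\<integral>g. ?A g + \<mu> + lam \<partial>gauss_vec m) = (\<integral>g. ?A g + \<mu> \<partial>gauss_vec m) + (\<integral>g. lam \<partial>gauss_vec m)"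
    using j1 ic by (rule Bochner_Integration.integral_add)
  also have "(\<integral>g. ?A g + \<mu> \<partial>gauss_vec m) = (\<integral>g. ?A g \<partial>gauss_vec m) + (\<integral>g. \<mu> \<partial>gauss_vec m)"
    using iA ic by (rule Bochner_Integration.integral_add)
  finally show "(\<integral>g. (\<Sum>i<n. c i * V i g) + \<mu> + lam + (\<Sum>i<n. (V i g)\<^sup>2) / \<mu>
            + (\<Sum>i<n. V i g ^ 4 / (r i * lam ^ 3)) \<partial>gauss_vec m)
         = \<mu> + lam + (\<Sum>i<n. s i) / \<mu> + 3 * (\<Sum>i<n. (s i)\<^sup>2 / r i) / lam ^ 3"
    unfolding eA eB eC cst by simp
qed

lemma piece_bound:
  fixes P :: "(nat \<Rightarrow> real) set" and V :: "nat \<Rightarrow> (nat \<Rightarrow> real) \<Rightarrow> real" and U :: "(nat \<Rightarrow> real) \<Rightarrow> real"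
  assumes ne: "P \<noteq> {}" and bnd: "\<forall>x\<in>P. \<forall>i<n. \<bar>x i\<bar> \<le> B" and B: "B \<ge> 0"
    and intV: "\<And>i. i < n \<Longrightarrow> integrable (gauss_vec m) (V i)"
    and intU: "integrable (gauss_vec m) U"
    and up: "\<And>x g. x \<in> P \<Longrightarrow> (\<Sum>i<n. x i * V i g) \<le> U g"
  shows "integrable (gauss_vec m) (\<lambda>g. Sup ((\<lambda>x. \<Sum>i<n. x i * V i g) ` P))"
    and "(\<integral>g. Sup ((\<lambda>x. \<Sum>i<n. x i * V i g) ` P) \<partial>gauss_vec m) \<le> (\<integral>g. U g \<partial>gauss_vec m)"
proof -
  show int: "integrable (gauss_vec m) (\<lambda>g. Sup ((\<lambda>x. \<Sum>i<n. x i * V i g) ` P))"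
    by (rule sup_integrable[OF ne bnd B intV])
  show "(\<integral>g. Sup ((\<lambda>x. \<Sum>i<n. x i * V i g) ` P) \<partial>gauss_vec m) \<le> (\<integral>g. U g \<partial>gauss_vec m)"
  proof (rule integral_mono[OF int intU])
    fix g
    show "Sup ((\<lambda>x. \<Sum>i<n. x i * V i g) ` P) \<le> U g"
      using ne up by (intro cSup_least) auto
  qed
qed

lemma final_arith:
  fixes E A Bq S Q :: real
  assumes H: "\<And>\<mu> lam. \<mu> > 0 \<Longrightarrow> lam > 0 \<Longrightarrow> E \<le> \<mu> + lam + A / \<mu> + 3 * Bq / lam ^ 3"
    and A: "0 \<le> A" "A\<^sup>2 \<le> S * Q" and Bq: "0 \<le> Bq" "Bq \<le> S * Q" and S: "0 \<le> S" and Q: "0 \<le> Q"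
  shows "E \<le> 8 * Q powr (1/4) * S powr (1/4)"
proof (cases "S * Q > 0")
  case True
  define R where "R = (S * Q) powr (1/4)"
  have R: "R > 0" unfolding R_def using True by (metis powr_gt_zero less_irrefl)
  have R4: "R ^ 4 = S * Q"
  proof -
    have "R ^ 4 = R powr (real 4)" using R by (simp add: powr_realpow)
    also have "\<dots> = S * Q" unfolding R_def using True by (simp add: powr_powr)
    finally show ?thesis .
  qed
  have AR: "A \<le> R\<^sup>2"
  proof -
    have e: "(R\<^sup>2)\<^sup>2 = R ^ 4" by (simp add: power2_eq_square power4_eq_xxxx)
    have "A\<^sup>2 \<le> (R\<^sup>2)\<^sup>2" using A(2) R4 e by linarith
    then show ?thesis by (rule power2_le_imp_le) simp
  qed
  have h: "E \<le> R + R + A / R + 3 * Bq / R ^ 3" by (rule H[OF R R])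
  have a: "A / R \<le> R" using AR R by (simp add: divide_le_eq power2_eq_square)
  have b: "3 * Bq / R ^ 3 \<le> 3 * R"
  proof -
    have e: "R * R ^ 3 = R ^ 4" by (simp add: power4_eq_xxxx power3_eq_cube)
    have "Bq \<le> R * R ^ 3" using Bq(2) R4 e by linarith
    then have "Bq / R ^ 3 \<le> R" using R by (simp add: divide_le_eq mult.commute)
    then show ?thesis by simp
  qed
  have r: "R = Q powr (1/4) * S powr (1/4)" unfolding R_def using S Q by (simp add: powr_mult mult.commute)
  have "E \<le> 8 * R" using h a b R by linarith
  then show ?thesis using r by (simp add: mult.assoc)
next
  case False
  then have SQ: "S * Q = 0" using mult_nonneg_nonneg[OF S Q] by linarith
  then have "A\<^sup>2 \<le> 0" using A(2) by linarith
  then have A0: "A = 0" by simp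
  have B0: "Bq = 0" using Bq SQ by simp
  have "E \<le> 0"
  proof (rule field_le_epsilon)
    fix e :: real assume e: "e > 0"
    have "E \<le> e/2 + e/2 + A / (e/2) + 3 * Bq / (e/2) ^ 3" using e by (intro H) auto
    then show "E \<le> 0 + e" using A0 B0 by simp
  qed
  also have "0 \<le> 8 * Q powr (1/4) * S powr (1/4)" by simp
  finally show ?thesis .
qed

lemma sigma_facts:
  fixes a :: "nat \<Rightarrow> nat \<Rightarrow> real" and z :: "nat \<Rightarrow> real" and n m :: nat
  defines "\<alpha> \<equiv> \<lambda>i. \<Sum>j<m. (a i j)\<^sup>2"
  defines "\<beta> \<equiv> \<lambda>i. \<Sum>j<m. (a i j)\<^sup>2 * (z j)^4"
  defines "s \<equiv> \<lambda>i. \<Sum>j<m. (a i j * z j)\<^sup>2"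
  defines "S \<equiv> \<Sum>i<n. \<alpha> i"
  defines "Q \<equiv> \<Sum>i<n. \<beta> i"
  shows "(\<Sum>i<n. s i)\<^sup>2 \<le> S * Q" and "(\<Sum>i<n. (s i)\<^sup>2 / (\<alpha> i / S)) \<le> S * Q"
    and "0 \<le> (\<Sum>i<n. s i)" and "0 \<le> (\<Sum>i<n. (s i)\<^sup>2 / (\<alpha> i / S))"
proof -
  have a0: "0 \<le> \<alpha> i" for i unfolding \<alpha>_def by (simp add: sum_nonneg)
  have b0: "0 \<le> \<beta> i" for i unfolding \<beta>_def by (intro sum_nonneg) (simp add: zero_le_even_power)
  have s0: "0 \<le> s i" for i unfolding s_def by (simp add: sum_nonneg)
  have S0: "0 \<le> S" unfolding S_def using a0 by (simp add: sum_nonneg)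
  have cs: "(s i)\<^sup>2 \<le> \<alpha> i * \<beta> i" for i
  proof -
    have "(\<Sum>j<m. a i j * (a i j * (z j)\<^sup>2))\<^sup>2 \<le> (\<Sum>j<m. (a i j)\<^sup>2) * (\<Sum>j<m. (a i j * (z j)\<^sup>2)\<^sup>2)"
      by (rule Cauchy_Schwarz_ineq_sum)
    moreover have "(\<Sum>j<m. a i j * (a i j * (z j)\<^sup>2)) = s i" unfolding s_def
      by (intro sum.cong) (auto simp: power2_eq_square)
    moreover have "(\<Sum>j<m. (a i j * (z j)\<^sup>2)\<^sup>2) = \<beta> i" unfolding \<beta>_def
      by (intro sum.cong) (auto simp: power2_eq_square power4_eq_xxxx)
    ultimately show ?thesis unfolding \<alpha>_def by simp
  qed
  show "0 \<le> (\<Sum>i<n. s i)" using s0 by (simp add: sum_nonneg)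
  show "0 \<le> (\<Sum>i<n. (s i)\<^sup>2 / (\<alpha> i / S))" using a0 S0 by (intro sum_nonneg divide_nonneg_nonneg) auto
  have ss: "s i \<le> sqrt (\<alpha> i) * sqrt (\<beta> i)" for i
  proof -
    have "s i \<le> sqrt (\<alpha> i * \<beta> i)" using cs[of i] by (rule real_le_rsqrt)
    then show ?thesis by (simp add: real_sqrt_mult)
  qed
  have "(\<Sum>i<n. s i) \<le> (\<Sum>i<n. sqrt (\<alpha> i) * sqrt (\<beta> i))" by (intro sum_mono ss)
  then have "(\<Sum>i<n. s i)\<^sup>2 \<le> (\<Sum>i<n. sqrt (\<alpha> i) * sqrt (\<beta> i))\<^sup>2"
    using s0 by (intro power_mono) (auto simp: sum_nonneg)
  also have "\<dots> \<le> (\<Sum>i<n. (sqrt (\<alpha> i))\<^sup>2) * (\<Sum>i<n. (sqrt (\<beta> i))\<^sup>2)"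
    by (rule Cauchy_Schwarz_ineq_sum)
  also have "\<dots> = S * Q" unfolding S_def Q_def using a0 b0 by simp
  finally show "(\<Sum>i<n. s i)\<^sup>2 \<le> S * Q" .
  have "(\<Sum>i<n. (s i)\<^sup>2 / (\<alpha> i / S)) \<le> (\<Sum>i<n. S * \<beta> i)"
  proof (rule sum_mono)
    fix i
    show "(s i)\<^sup>2 / (\<alpha> i / S) \<le> S * \<beta> i"
    proof (cases "\<alpha> i = 0 \<or> S = 0")
      case True
      then show ?thesis using S0 b0[of i] by auto
    next
      case False
      then have ap: "\<alpha> i > 0" "S > 0" using a0[of i] S0 by auto
      have "(s i)\<^sup>2 / (\<alpha> i / S) = (s i)\<^sup>2 * S / \<alpha> i" using ap by simp
      also have "\<dots> \<le> (\<alpha> i * \<beta> i) * S / \<alpha> i"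
        using cs[of i] ap by (intro divide_right_mono mult_right_mono) auto
      also have "\<dots> = S * \<beta> i" using ap by simp
      finally show ?thesis .
    qed
  qed
  also have "\<dots> = S * Q" unfolding Q_def by (simp add: sum_distrib_left)
  finally show "(\<Sum>i<n. (s i)\<^sup>2 / (\<alpha> i / S)) \<le> S * Q" .
qed


theorem theorem5p5:
  shows "\<exists>C>0. \<forall>p::real. p \<ge> 1 \<longrightarrow>
    (\<forall>(n::nat) (m::nat) (a::nat \<Rightarrow> nat \<Rightarrow> real) (T::(nat \<Rightarrow> real) set).
      T \<subseteq> mink_sum (ball2 n) (dilate (sqrt p) (ball1 n)) \<longrightarrow>
      (\<exists>(N::nat) (Tl::nat \<Rightarrow> (nat \<Rightarrow> real) set).
         real N \<le> exp (C * p) \<and>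
         T = (\<Union>l\<in>{1..N}. Tl l) \<and>
         (\<forall>l\<in>{1..N}. \<forall>z::nat \<Rightarrow> real. Tl l \<noteq> {} \<longrightarrow>
            integrable (gauss_vec m)
              (\<lambda>g. Sup ((\<lambda>x. \<Sum>i<n. \<Sum>j<m. a i j * x i * g j * z j) ` Tl l)) \<and>
            (\<integral>g. Sup ((\<lambda>x. \<Sum>i<n. \<Sum>j<m. a i j * x i * g j * z j) ` Tl l) \<partial>gauss_vec m)
              \<le> C * (\<Sum>i<n. \<Sum>j<m. (a i j)\<^sup>2 * (z j)^4) powr (1/4)
                  * (\<Sum>i<n. \<Sum>j<m. (a i j)\<^sup>2) powr (1/4))))"
proof (rule exI[of _ 8], intro conjI allI impI)
  show "(0::real) < 8" by simp
  fix p :: real and n m :: nat and a :: "nat \<Rightarrow> nat \<Rightarrow> real" and T :: "(nat \<Rightarrow> real) set"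
  assume p: "1 \<le> p" and T: "T \<subseteq> mink_sum (ball2 n) (dilate (sqrt p) (ball1 n))"
  define S where "S = (\<Sum>i<n. \<Sum>j<m. (a i j)\<^sup>2)"
  define \<alpha> where "\<alpha> = (\<lambda>i. \<Sum>j<m. (a i j)\<^sup>2)"
  define r where "r = (\<lambda>i. \<alpha> i / S)"
  have a0: "0 \<le> \<alpha> i" for i unfolding \<alpha>_def by (simp add: sum_nonneg)
  have S0: "0 \<le> S" unfolding S_def by (simp add: sum_nonneg)
  have SA: "S = (\<Sum>i<n. \<alpha> i)" unfolding S_def \<alpha>_def by simp
  have r0: "0 \<le> r i" for i unfolding r_def using a0 S0 by simp
  have rs: "(\<Sum>i<n. r i) \<le> 1"
  proof -
    have "(\<Sum>i<n. r i) = (\<Sum>i<n. \<alpha> i) / S" unfolding r_def by (rule sum_divide_distrib[symmetric])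
    then have "(\<Sum>i<n. r i) = S / S" using SA by simp
    then show ?thesis by (cases "S = 0") auto
  qed
  have rv0: "\<And>j. j < m \<Longrightarrow> a i j = 0" if i: "i < n" and ri: "r i = 0" for i
  proof -
    have "\<alpha> i = 0"
    proof (cases "S = 0")
      case True
      have "\<alpha> i \<le> S" unfolding SA using i a0 by (intro member_le_sum) auto
      then show ?thesis using True a0[of i] by simp
    next
      case False
      then show ?thesis using ri unfolding r_def by simp
    qed
    then show "\<And>j. j < m \<Longrightarrow> a i j = 0" unfolding \<alpha>_def
      by (subst (asm) sum_nonneg_eq_0_iff) auto
  qed
  define dec where "dec = (\<lambda>x. SOME uw. fst uw \<in> ball2 n \<and> snd uw \<in> ball1 n \<and>
                             x = (\<lambda>i. fst uw i + sqrt p * snd uw i))"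
  have decP: "fst (dec x) \<in> ball2 n \<and> snd (dec x) \<in> ball1 n \<and> x = (\<lambda>i. fst (dec x) i + sqrt p * snd (dec x) i)"
    if x: "x \<in> T" for x
  proof -
    from x T have "x \<in> mink_sum (ball2 n) (dilate (sqrt p) (ball1 n))" by blast
    then obtain u v where uv: "x = (\<lambda>i. u i + v i)" "u \<in> ball2 n" "v \<in> dilate (sqrt p) (ball1 n)"
      unfolding mink_sum_def by blast
    then obtain w where w: "v = (\<lambda>i. sqrt p * w i)" "w \<in> ball1 n" unfolding dilate_def by blast
    have "\<exists>uw. fst uw \<in> ball2 n \<and> snd uw \<in> ball1 n \<and> x = (\<lambda>i. fst uw i + sqrt p * snd uw i)"
      using uv w by (intro exI[of _ "(u, w)"]) auto
    then show ?thesis unfolding dec_def by (rule someI_ex)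
  qed
  define cen where "cen = (\<lambda>x. restrict (\<lambda>i. kf p (r i) (sqrt p * snd (dec x) i)) {..<n})"
  have cenP: "cen x \<in> Phi p n r" if "x \<in> T" for x
    unfolding cen_def using kf_mem[OF p] decP[OF that] by blast
  define N where "N = card (Phi p n r)"
  obtain h where h: "bij_betw h {1..N} (Phi p n r)"
    unfolding N_def using ex_bij_betw_nat_finite_1[OF Phi_fin] by blast
  define Tl where "Tl = (\<lambda>l. {x \<in> T. cen x = h l})"
  show "\<exists>N Tl. real N \<le> exp (8 * p) \<and>
         T = (\<Union>l\<in>{1..N}. Tl l) \<and>
         (\<forall>l\<in>{1..N}. \<forall>z::nat \<Rightarrow> real. Tl l \<noteq> {} \<longrightarrow>
            integrable (gauss_vec m)
              (\<lambda>g. Sup ((\<lambda>x. \<Sum>i<n. \<Sum>j<m. a i j * x i * g j * z j) ` Tl l)) \<and>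
            (\<integral>g. Sup ((\<lambda>x. \<Sum>i<n. \<Sum>j<m. a i j * x i * g j * z j) ` Tl l) \<partial>gauss_vec m)
              \<le> 8 * (\<Sum>i<n. \<Sum>j<m. (a i j)\<^sup>2 * (z j)^4) powr (1/4)
                  * (\<Sum>i<n. \<Sum>j<m. (a i j)\<^sup>2) powr (1/4))"
  proof (intro exI[of _ N] exI[of _ Tl] conjI ballI allI impI)
    show "real N \<le> exp (8 * p)" unfolding N_def by (rule Phi_card[OF p r0 rs])
    show "T = (\<Union>l\<in>{1..N}. Tl l)"
    proof
      show "T \<subseteq> (\<Union>l\<in>{1..N}. Tl l)"
      proof
        fix x assume x: "x \<in> T"
        have "cen x \<in> h ` {1..N}" using cenP[OF x] h by (simp add: bij_betw_def)
        then obtain l where "l \<in> {1..N}" "cen x = h l" by blast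
        then show "x \<in> (\<Union>l\<in>{1..N}. Tl l)" using x unfolding Tl_def by blast
      qed
      show "(\<Union>l\<in>{1..N}. Tl l) \<subseteq> T" unfolding Tl_def by blast
    qed
    fix l z assume l: "l \<in> {1..N}" and ne: "Tl l \<noteq> {}"
    define V where "V = (\<lambda>i g. \<Sum>j<m. (a i j * z j) * g j)"
    have img: "(\<lambda>x. \<Sum>i<n. \<Sum>j<m. a i j * x i * g j * z j) ` Tl l = (\<lambda>x. \<Sum>i<n. x i * V i g) ` Tl l" for g
      unfolding V_def by (intro image_cong refl sum.cong) (auto simp: sum_distrib_left mult_ac)
    define B where "B = 1 + sqrt p"
    have B0: "B \<ge> 0" unfolding B_def using p by simp
    have bnd: "\<forall>x\<in>Tl l. \<forall>i<n. \<bar>x i\<bar> \<le> B"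
    proof (intro ballI allI impI)
      fix x i assume x: "x \<in> Tl l" and i: "i < n"
      then have xT: "x \<in> T" unfolding Tl_def by auto
      let ?u = "fst (dec x)" and ?w = "snd (dec x)"
      have u: "?u \<in> ball2 n" and w: "?w \<in> ball1 n" and xe: "x = (\<lambda>i. ?u i + sqrt p * ?w i)"
        using decP[OF xT] by auto
      have "(?u i)\<^sup>2 \<le> (\<Sum>i<n. (?u i)\<^sup>2)" using i by (intro member_le_sum) auto
      also have "\<dots> \<le> 1" using u by (simp add: ball2_def)
      finally have ui: "\<bar>?u i\<bar> \<le> 1" by (simp add: abs_square_le_1)
      have "\<bar>?w i\<bar> \<le> (\<Sum>i<n. \<bar>?w i\<bar>)" using i by (intro member_le_sum) auto
      also have "\<dots> \<le> 1" using w by (simp add: ball1_def)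
      finally have wi: "\<bar>?w i\<bar> \<le> 1" .
      have xi: "x i = ?u i + sqrt p * ?w i" by (subst xe) simp
      have "\<bar>sqrt p * ?w i\<bar> = sqrt p * \<bar>?w i\<bar>" using p by (simp add: abs_mult)
      then have "\<bar>x i\<bar> \<le> \<bar>?u i\<bar> + sqrt p * \<bar>?w i\<bar>" unfolding xi by linarith
      also have "\<dots> \<le> 1 + sqrt p * 1" using ui wi p by (intro add_mono mult_left_mono) auto
      finally show "\<bar>x i\<bar> \<le> B" unfolding B_def by simp
    qed
    have intV: "integrable (gauss_vec m) (V i)" for i
      using gv_lin_moments(1)[where b="\<lambda>j. a i j * z j" and m=m and k=1] unfolding V_def by simp
    define k where "k = h l"
    define c where "c = (\<lambda>i. of_int (k i) / sqrt p)"
    define U where "U = (\<lambda>\<mu> lam g. (\<Sum>i<n. c i * V i g) + \<mu> + lam + (\<Sum>i<n. (V i g)\<^sup>2) / \<mu>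
            + (\<Sum>i<n. V i g ^ 4 / (r i * lam ^ 3)))"
    define s where "s = (\<lambda>i. \<Sum>j<m. (a i j * z j)\<^sup>2)"
    have intU: "integrable (gauss_vec m) (U \<mu> lam)" for \<mu> lam
      unfolding U_def V_def by (rule upper_integral(1))
    have EU: "(\<integral>g. U \<mu> lam g \<partial>gauss_vec m) = \<mu> + lam + (\<Sum>i<n. s i) / \<mu> + 3 * (\<Sum>i<n. (s i)\<^sup>2 / r i) / lam ^ 3"
      for \<mu> lam unfolding U_def V_def s_def by (rule upper_integral(2))
    have up: "(\<Sum>i<n. x i * V i g) \<le> U \<mu> lam g" if x: "x \<in> Tl l" and mu: "\<mu> > 0" and la: "lam > 0" for x g \<mu> lam
    proof -
      have xT: "x \<in> T" and cx: "cen x = k" using x unfolding Tl_def k_def by auto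
      let ?u = "fst (dec x)" and ?w = "snd (dec x)"
      have u: "?u \<in> ball2 n" and w: "?w \<in> ball1 n" and xe: "x = (\<lambda>i. ?u i + sqrt p * ?w i)"
        using decP[OF xT] by auto
      have rvi: "V i g = 0" if "i < n" "r i = 0" for i
        unfolding V_def using rv0[OF that] by simp
      have "(\<Sum>i<n. x i * V i g) = (\<Sum>i<n. (?u i + sqrt p * ?w i) * V i g)"
        by (subst xe) simp
      also have "\<dots> \<le> (\<Sum>i<n. of_int (kf p (r i) (sqrt p * ?w i)) / sqrt p * V i g) + \<mu> + lam
        + (\<Sum>i<n. (V i g)\<^sup>2) / \<mu> + (\<Sum>i<n. V i g ^ 4 / (r i * lam ^ 3))"
        by (rule center_bound[OF p u w r0 rvi mu la])
      also have "(\<Sum>i<n. of_int (kf p (r i) (sqrt p * ?w i)) / sqrt p * V i g) = (\<Sum>i<n. c i * V i g)"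
      proof (rule sum.cong[OF refl])
        fix i assume "i \<in> {..<n}"
        then have "kf p (r i) (sqrt p * ?w i) = k i" using cx unfolding cen_def by auto
        then show "of_int (kf p (r i) (sqrt p * ?w i)) / sqrt p * V i g = c i * V i g"
          unfolding c_def by simp
      qed
      finally show ?thesis unfolding U_def by simp
    qed
    have PB: "integrable (gauss_vec m) (\<lambda>g. Sup ((\<lambda>x. \<Sum>i<n. x i * V i g) ` Tl l)) \<and>
        (\<integral>g. Sup ((\<lambda>x. \<Sum>i<n. x i * V i g) ` Tl l) \<partial>gauss_vec m) \<le> (\<integral>g. U \<mu> lam g \<partial>gauss_vec m)"
      if mu: "\<mu> > 0" and la: "lam > 0" for \<mu> lam
      using piece_bound[OF ne bnd B0 intV intU up[OF _ mu la]] by blast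
    show "integrable (gauss_vec m) (\<lambda>g. Sup ((\<lambda>x. \<Sum>i<n. \<Sum>j<m. a i j * x i * g j * z j) ` Tl l))"
      unfolding img using PB[of 1 1] by simp
    let ?E = "(\<integral>g. Sup ((\<lambda>x. \<Sum>i<n. x i * V i g) ` Tl l) \<partial>gauss_vec m)"
    have H: "?E \<le> \<mu> + lam + (\<Sum>i<n. s i) / \<mu> + 3 * (\<Sum>i<n. (s i)\<^sup>2 / r i) / lam ^ 3"
      if "\<mu> > 0" "lam > 0" for \<mu> lam
      using PB[OF that] EU[of \<mu> lam] by simp
    have sf: "(\<Sum>i<n. s i)\<^sup>2 \<le> S * (\<Sum>i<n. \<Sum>j<m. (a i j)\<^sup>2 * (z j)^4)"
        "(\<Sum>i<n. (s i)\<^sup>2 / r i) \<le> S * (\<Sum>i<n. \<Sum>j<m. (a i j)\<^sup>2 * (z j)^4)"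
        "0 \<le> (\<Sum>i<n. s i)" "0 \<le> (\<Sum>i<n. (s i)\<^sup>2 / r i)"
      using sigma_facts[where a=a and z=z and n=n and m=m] unfolding s_def r_def \<alpha>_def SA by simp_all
    have Q0: "0 \<le> (\<Sum>i<n. \<Sum>j<m. (a i j)\<^sup>2 * (z j)^4)"
      by (intro sum_nonneg mult_nonneg_nonneg) (auto simp: zero_le_even_power)
    have "?E \<le> 8 * (\<Sum>i<n. \<Sum>j<m. (a i j)\<^sup>2 * (z j)^4) powr (1/4) * S powr (1/4)"
      by (rule final_arith[OF H sf(3) sf(1) sf(4) sf(2) S0 Q0])
    then show "(\<integral>g. Sup ((\<lambda>x. \<Sum>i<n. \<Sum>j<m. a i j * x i * g j * z j) ` Tl l) \<partial>gauss_vec m)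
              \<le> 8 * (\<Sum>i<n. \<Sum>j<m. (a i j)\<^sup>2 * (z j)^4) powr (1/4)
                  * (\<Sum>i<n. \<Sum>j<m. (a i j)\<^sup>2) powr (1/4)"
      unfolding img S_def by simp
  qed
qed

end
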